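(* Let $(S,M)$ be a surface with marked points and empty boundary. (a) If $(S,M)$ is not a sphere with $4$ or $5$ punctures, it has an ideal triangulation satisfying (T4). (b) If $(S,M)$ is a sphere with $5$ punctures, it has an ideal triangulation satisfying (T3$\tfrac12$), but no ideal triangulation satisfying (T4). (c) If $(S,M)$ is a sphere with $4$ punctures, it has an ideal triangulation satisfying (T3), but no ideal triangulation satisfying (T3$\tfrac12$).
   Context: $(S,M)$: $S$ compact, connected, oriented surface without boundary, $M$ a finite non-empty set of punctures, admitting ideal triangulations (not a sphere with fewer than four punctures). Arcs incident to a puncture are counted with multiplicity (an arc with both endpoints at the puncture counts twice). (T3): at each puncture at least three arcs of $T$ are incident. (T3$\tfrac12$): $T$ has (T3) and every arc of $T$ has an endpoint with at least four incident arcs. (T4): at each puncture at least four arcs of $T$ are incident. *)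

theory Defs
  imports Main
begin

text \<open>
A triangulation consists of m triangles numbered 0..<m; triangle t
has corners (t,0),(t,1),(t,2) (in the cyclic order given by the orientation)
and sides (t,i), side (t,i) running from corner (t,i) to corner (t,(i+1) mod 3).
The gluing gl is a fixed-point-free involution on the sides; gluing side (t,i)
to side (t',j) is orientation-reversing, i.e. it identifies corner (t,i) with
corner (t',(j+1) mod 3) and corner (t,(i+1) mod 3) with corner (t',j).
Self-gluings of sides of the same triangle (self-folded triangles) are allowed.
Arcs are the gl-orbits of sides; punctures are the classes of corners.
\<close>

definition sides :: "nat \<Rightarrow> (nat \<times> nat) set" where
  "sides m = {0..<m} \<times> {0..<3}"

definition side_start :: "nat \<times> nat \<Rightarrow> nat \<times> nat" where
  "side_start s = s"

definition side_end :: "nat \<times> nat \<Rightarrow> nat \<times> nat" where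
  "side_end s = (fst s, (snd s + 1) mod 3)"

definition is_gluing :: "nat \<Rightarrow> (nat \<times> nat \<Rightarrow> nat \<times> nat) \<Rightarrow> bool" where
  "is_gluing m gl \<longleftrightarrow> 0 < m \<and>
     (\<forall>s\<in>sides m. gl s \<in> sides m \<and> gl s \<noteq> s \<and> gl (gl s) = s)"

definition corner_glue :: "nat \<Rightarrow> (nat \<times> nat \<Rightarrow> nat \<times> nat) \<Rightarrow> ((nat \<times> nat) \<times> (nat \<times> nat)) set" where
  "corner_glue m gl =
     {(side_start s, side_end (gl s)) | s. s \<in> sides m} \<union>
     {(side_end s, side_start (gl s)) | s. s \<in> sides m}"

definition vert_rel :: "nat \<Rightarrow> (nat \<times> nat \<Rightarrow> nat \<times> nat) \<Rightarrow> ((nat \<times> nat) \<times> (nat \<times> nat)) set" where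
  "vert_rel m gl = (corner_glue m gl \<union> (corner_glue m gl)\<inverse>)\<^sup>*"

definition vertex_of :: "nat \<Rightarrow> (nat \<times> nat \<Rightarrow> nat \<times> nat) \<Rightarrow> nat \<times> nat \<Rightarrow> (nat \<times> nat) set" where
  "vertex_of m gl c = vert_rel m gl `` {c}"

definition punctures :: "nat \<Rightarrow> (nat \<times> nat \<Rightarrow> nat \<times> nat) \<Rightarrow> (nat \<times> nat) set set" where
  "punctures m gl = sides m // vert_rel m gl"

definition num_arcs :: "nat \<Rightarrow> nat" where
  "num_arcs m = card (sides m) div 2"

text \<open>Number of arcs incident to puncture v, counted with multiplicity (a loop
  at v counts twice).  Summing endpoint incidences over all sides counts every
  arc end twice (once for each of the two sides forming the arc).\<close>
definition degree :: "nat \<Rightarrow> (nat \<times> nat \<Rightarrow> nat \<times> nat) \<Rightarrow> (nat \<times> nat) set \<Rightarrow> nat" where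
  "degree m gl v =
     (\<Sum>s\<in>sides m. (if vertex_of m gl (side_start s) = v then 1 else 0)
                   + (if vertex_of m gl (side_end s) = v then 1 else 0)) div 2"

definition tri_adj :: "nat \<Rightarrow> (nat \<times> nat \<Rightarrow> nat \<times> nat) \<Rightarrow> (nat \<times> nat) set" where
  "tri_adj m gl = {(fst s, fst (gl s)) | s. s \<in> sides m}"

definition tri_connected :: "nat \<Rightarrow> (nat \<times> nat \<Rightarrow> nat \<times> nat) \<Rightarrow> bool" where
  "tri_connected m gl \<longleftrightarrow> (\<forall>t<m. \<forall>t'<m. (t, t') \<in> (tri_adj m gl)\<^sup>*)"

definition ideal_triangulation :: "nat \<Rightarrow> nat \<Rightarrow> nat \<Rightarrow> (nat \<times> nat \<Rightarrow> nat \<times> nat) \<Rightarrow> bool" where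
  "ideal_triangulation g n m gl \<longleftrightarrow>
     is_gluing m gl \<and> tri_connected m gl \<and> card (punctures m gl) = n \<and>
     int (card (punctures m gl)) - int (num_arcs m) + int m = 2 - 2 * int g"

definition T3 :: "nat \<Rightarrow> (nat \<times> nat \<Rightarrow> nat \<times> nat) \<Rightarrow> bool" where
  "T3 m gl \<longleftrightarrow> (\<forall>v\<in>punctures m gl. 3 \<le> degree m gl v)"

definition T4 :: "nat \<Rightarrow> (nat \<times> nat \<Rightarrow> nat \<times> nat) \<Rightarrow> bool" where
  "T4 m gl \<longleftrightarrow> (\<forall>v\<in>punctures m gl. 4 \<le> degree m gl v)"

definition T3half :: "nat \<Rightarrow> (nat \<times> nat \<Rightarrow> nat \<times> nat) \<Rightarrow> bool" where
  "T3half m gl \<longleftrightarrow> T3 m gl \<and>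
     (\<forall>s\<in>sides m. 4 \<le> degree m gl (vertex_of m gl (side_start s))
                 \<or> 4 \<le> degree m gl (vertex_of m gl (side_end s)))"

end

theory Submission
  imports Defs
begin


definition rot :: "(nat \<times> nat \<Rightarrow> nat \<times> nat) \<Rightarrow> nat \<times> nat \<Rightarrow> nat \<times> nat" where
  "rot gl s = side_end (gl s)"

lemma sides_iff: "s \<in> sides m \<longleftrightarrow> fst s < m \<and> snd s < 3"
  by (cases s) (auto simp: sides_def)

lemma side_end_in: "s \<in> sides m \<Longrightarrow> side_end s \<in> sides m"
  by (cases s) (auto simp: sides_def side_end_def)

lemma card_sides: "card (sides m) = 3 * m"
  by (simp add: sides_def card_cartesian_product)

lemma finite_sides: "finite (sides m)"
  by (simp add: sides_def)

lemma vr_equiv: "equiv UNIV (vert_rel m gl)"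
  unfolding equiv_def vert_rel_def
  by (auto simp: refl_rtrancl trans_rtrancl sym_rtrancl sym_Un_converse)

lemma vr_sym: "(a, b) \<in> vert_rel m gl \<Longrightarrow> (b, a) \<in> vert_rel m gl"
  using vr_equiv[of m gl] unfolding equiv_def sym_def by blast

lemma vr_trans: "(a, b) \<in> vert_rel m gl \<Longrightarrow> (b, c) \<in> vert_rel m gl \<Longrightarrow> (a, c) \<in> vert_rel m gl"
  unfolding vert_rel_def by (rule rtrancl_trans)

lemma vr_step: "s \<in> sides m \<Longrightarrow> (s, rot gl s) \<in> vert_rel m gl"
  unfolding vert_rel_def rot_def corner_glue_def side_start_def
  by (rule r_into_rtrancl) blast

lemma vr_stepb: "s \<in> sides m \<Longrightarrow> (rot gl s, s) \<in> vert_rel m gl"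
  by (rule vr_sym, rule vr_step)

lemma vr_refl: "(a, a) \<in> vert_rel m gl"
  unfolding vert_rel_def by simp

lemma glue_in:
  assumes G: "is_gluing m gl" and e: "(a, b) \<in> corner_glue m gl \<union> (corner_glue m gl)\<inverse>"
  shows "a \<in> sides m \<and> b \<in> sides m"
  using e G side_end_in unfolding corner_glue_def is_gluing_def side_start_def by blast

lemma vr_closed:
  assumes G: "is_gluing m gl" and "(a, b) \<in> vert_rel m gl" and "a \<in> sides m"
  shows "b \<in> sides m"
  using assms(2,3) unfolding vert_rel_def
  by (induction rule: rtrancl_induct) (use glue_in[OF G] in blast)+

lemma rot_gl: "is_gluing m gl \<Longrightarrow> s \<in> sides m \<Longrightarrow> rot gl (gl s) = side_end s"
  unfolding is_gluing_def rot_def by simp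

lemma vr_lab:
  assumes G: "is_gluing m gl" and inv: "\<forall>s\<in>sides m. lab (rot gl s) = lab s"
    and r: "(a, b) \<in> vert_rel m gl"
  shows "lab a = lab b"
proof -
  have e: "lab x = lab y" if "(x, y) \<in> corner_glue m gl" for x y
  proof -
    from that obtain s where s: "s \<in> sides m" and d: "(x = s \<and> y = side_end (gl s)) \<or> (x = side_end s \<and> y = gl s)"
      unfolding corner_glue_def side_start_def by blast
    from d show ?thesis
    proof
      assume "x = s \<and> y = side_end (gl s)"
      then show ?thesis using inv s by (simp add: rot_def)
    next
      assume h: "x = side_end s \<and> y = gl s"
      have "gl s \<in> sides m" using G s unfolding is_gluing_def by blast
      then have "lab (rot gl (gl s)) = lab (gl s)" using inv by blast
      then show ?thesis using h rot_gl[OF G s] by simp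
    qed
  qed
  show ?thesis using r unfolding vert_rel_def
    by (induction rule: rtrancl_induct) (use e in auto)
qed

lemma vertex_of_eq: "vertex_of m gl a = vertex_of m gl b \<longleftrightarrow> (a, b) \<in> vert_rel m gl"
  unfolding vertex_of_def using equiv_class_eq_iff[OF vr_equiv[of m gl]] by simp

lemma vertex_of_sub:
  assumes G: "is_gluing m gl" and "a \<in> sides m"
  shows "vertex_of m gl a \<subseteq> sides m"
  using vr_closed[OF G _ assms(2)] unfolding vertex_of_def by blast

lemma punctures_img: "punctures m gl = vertex_of m gl ` sides m"
  unfolding punctures_def quotient_def vertex_of_def by blast

lemma sum_ind: "(\<Sum>s\<in>A. (if P s then 1 else 0 :: nat)) = card {s\<in>A. P s}" if "finite A"
  using that by (simp add: sum.If_cases Int_def)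

lemma gl_bij: "is_gluing m gl \<Longrightarrow> bij_betw gl (sides m) (sides m)"
  unfolding is_gluing_def
  by (rule bij_betw_byWitness[where f'=gl]) auto

lemma degree_eq:
  assumes G: "is_gluing m gl" and s0: "s0 \<in> sides m"
  shows "degree m gl (vertex_of m gl s0) = card (vertex_of m gl s0)"
proof -
  let ?v = "vertex_of m gl s0"
  let ?S = "sides m"
  have ve: "vertex_of m gl (side_end s) = vertex_of m gl (gl s)" if "s \<in> ?S" for s
  proof -
    have "gl s \<in> ?S" using G that unfolding is_gluing_def by blast
    then have "(gl s, rot gl (gl s)) \<in> vert_rel m gl" by (rule vr_step)
    then show ?thesis using rot_gl[OF G that] vertex_of_eq by (metis vr_sym)
  qed
  have A: "(\<Sum>s\<in>?S. (if vertex_of m gl (side_start s) = ?v then 1 else 0 :: nat)) = card {s\<in>?S. vertex_of m gl s = ?v}"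
    by (simp add: side_start_def sum_ind finite_sides)
  have "(\<Sum>s\<in>?S. (if vertex_of m gl (side_end s) = ?v then 1 else 0 :: nat))
      = (\<Sum>s\<in>?S. (if vertex_of m gl (gl s) = ?v then 1 else 0 :: nat))"
    by (rule sum.cong) (auto simp: ve)
  also have "\<dots> = (\<Sum>s\<in>?S. (if vertex_of m gl s = ?v then 1 else 0 :: nat))"
    using sum.reindex_bij_betw[OF gl_bij[OF G], of "\<lambda>s. (if vertex_of m gl s = ?v then 1 else 0 :: nat)"]
    by simp
  finally have B: "(\<Sum>s\<in>?S. (if vertex_of m gl (side_end s) = ?v then 1 else 0 :: nat)) = card {s\<in>?S. vertex_of m gl s = ?v}"
    by (simp add: sum_ind finite_sides)
  have C: "{s\<in>?S. vertex_of m gl s = ?v} = ?v"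
  proof -
    have "{s\<in>?S. vertex_of m gl s = ?v} = {s\<in>?S. (s0, s) \<in> vert_rel m gl}"
      using vertex_of_eq vr_sym by blast
    also have "\<dots> = ?v" using vertex_of_sub[OF G s0] unfolding vertex_of_def by blast
    finally show ?thesis .
  qed
  show ?thesis unfolding degree_def sum.distrib A B C by simp
qed

lemma card_img_eq:
  assumes H: "\<forall>s\<in>A. \<forall>t\<in>A. f s = f t \<longleftrightarrow> h s = h t"
  shows "card (f ` A) = card (h ` A)"
proof -
  let ?F = "\<lambda>x. h (inv_into A f x)"
  have i: "inv_into A f (f a) \<in> A" "f (inv_into A f (f a)) = f a" if "a \<in> A" for a
    using that by (auto intro: inv_into_into f_inv_into_f)
  have hh: "h (inv_into A f (f a)) = h a" if "a \<in> A" for a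
    using H i[OF that] that by blast
  have "inj_on ?F (f ` A)"
  proof (rule inj_onI)
    fix x y assume "x \<in> f ` A" "y \<in> f ` A" "?F x = ?F y"
    then obtain a b where ab: "a \<in> A" "b \<in> A" "x = f a" "y = f b" "h a = h b"
      using hh by auto
    then show "x = y" using H by blast
  qed
  moreover have "?F ` (f ` A) = h ` A"
    using hh by (auto simp: image_iff)
  ultimately show ?thesis by (metis card_image)
qed

lemma labeling:
  assumes G: "is_gluing m gl"
    and inv: "\<forall>s\<in>sides m. lab (rot gl s) = lab s"
    and con: "\<forall>s\<in>sides m. (s, rep (lab s)) \<in> vert_rel m gl"
  shows "card (punctures m gl) = card (lab ` sides m)"
    and "\<And>s. s \<in> sides m \<Longrightarrow> degree m gl (vertex_of m gl s) = card {t\<in>sides m. lab t = lab s}"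
proof -
  have eq: "vertex_of m gl s = vertex_of m gl t \<longleftrightarrow> lab s = lab t" if "s \<in> sides m" "t \<in> sides m" for s t
  proof
    assume "vertex_of m gl s = vertex_of m gl t"
    then show "lab s = lab t" using vertex_of_eq vr_lab[OF G inv] by blast
  next
    assume "lab s = lab t"
    then have "(s, t) \<in> vert_rel m gl" using con that by (metis vr_sym vr_trans)
    then show "vertex_of m gl s = vertex_of m gl t" using vertex_of_eq by blast
  qed
  show "card (punctures m gl) = card (lab ` sides m)"
    unfolding punctures_img by (rule card_img_eq) (use eq in blast)
  fix s assume s: "s \<in> sides m"
  have "vertex_of m gl s = {t\<in>sides m. vertex_of m gl t = vertex_of m gl s}"
  proof -
    have "vertex_of m gl s \<subseteq> sides m" by (rule vertex_of_sub[OF G s])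
    moreover have "t \<in> vertex_of m gl s \<longleftrightarrow> vertex_of m gl t = vertex_of m gl s" for t
      using vertex_of_eq vr_sym unfolding vertex_of_def by blast
    ultimately show ?thesis by blast
  qed
  also have "\<dots> = {t\<in>sides m. lab t = lab s}" using eq s by blast
  finally show "degree m gl (vertex_of m gl s) = card {t\<in>sides m. lab t = lab s}"
    using degree_eq[OF G s] by simp
qed


lemma rot_in: "is_gluing m gl \<Longrightarrow> s \<in> sides m \<Longrightarrow> rot gl s \<in> sides m"
  unfolding rot_def is_gluing_def using side_end_in by blast

lemma con3:
  assumes G: "is_gluing m gl" and s: "s \<in> sides m"
    and h: "x = s \<or> x = rot gl s \<or> x = rot gl (rot gl s)"
  shows "(s, x) \<in> vert_rel m gl"
  using h vr_refl vr_step[OF s] vr_trans vr_step[OF rot_in[OF G s]] by blast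

lemma tri_conn_chain:
  assumes "\<And>t. t + 1 < m \<Longrightarrow> (t, t+1) \<in> tri_adj m gl \<and> (t+1, t) \<in> tri_adj m gl"
  shows "tri_connected m gl"
proof -
  have a: "t < m \<Longrightarrow> (0, t) \<in> (tri_adj m gl)\<^sup>* \<and> (t, 0) \<in> (tri_adj m gl)\<^sup>*" for t
  proof (induction t)
    case 0 then show ?case by simp
  next
    case (Suc t)
    then have "(t, Suc t) \<in> tri_adj m gl" "(Suc t, t) \<in> tri_adj m gl" using assms[of t] by auto
    then show ?case using Suc by (meson Suc_lessD rtrancl.rtrancl_into_rtrancl converse_rtrancl_into_rtrancl)
  qed
  show ?thesis unfolding tri_connected_def using a by (meson rtrancl_trans)
qed

lemma adjI: "s \<in> sides m \<Longrightarrow> gl s = s' \<Longrightarrow> (fst s, fst s') \<in> tri_adj m gl"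
  unfolding tri_adj_def by blast

lemma inv_even:
  assumes "finite A" "\<forall>x\<in>A. f x \<in> A \<and> f x \<noteq> x \<and> f (f x) = x"
  shows "even (card A)"
  using assms
proof (induction "card A" arbitrary: A rule: less_induct)
  case less
  show ?case
  proof (cases "A = {}")
    case True then show ?thesis by simp
  next
    case False
    then obtain a where a: "a \<in> A" by blast
    let ?A = "A - {a, f a}"
    have fa: "f a \<in> A" "f a \<noteq> a" using less.prems a by auto
    have c: "card ?A + 2 = card A"
    proof -
      have "card ?A = card A - card {a, f a}"
        using a fa less.prems(1) by (intro card_Diff_subset) auto
      moreover have "card {a, f a} = 2" using fa by simp
      moreover have "2 \<le> card A" using a fa less.prems(1)
        using card_mono[of A "{a, f a}"] by simp
      ultimately show ?thesis by simp
    qed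
    have "\<forall>x\<in>?A. f x \<in> ?A \<and> f x \<noteq> x \<and> f (f x) = x"
    proof
      fix x assume x: "x \<in> ?A"
      then have x': "x \<in> A" "x \<noteq> a" "x \<noteq> f a" by auto
      then have p: "f x \<in> A" "f x \<noteq> x" "f (f x) = x" using less.prems(2) by auto
      have "f x \<noteq> a" using p x' by metis
      moreover have "f x \<noteq> f a" using p x' less.prems(2) a by metis
      ultimately show "f x \<in> ?A \<and> f x \<noteq> x \<and> f (f x) = x" using p by auto
    qed
    moreover have "card ?A < card A" using c by simp
    moreover have "finite ?A" using less.prems(1) by simp
    ultimately have "even (card ?A)" using less.hyps[of ?A] by blast
    then show ?thesis using c by (metis even_add even_numeral)
  qed
qed

lemma sides_even: "is_gluing m gl \<Longrightarrow> even m"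
proof -
  assume G: "is_gluing m gl"
  have "even (card (sides m))"
    using inv_even[of "sides m" gl] G finite_sides unfolding is_gluing_def by blast
  then show "even m" by (simp add: card_sides)
qed

lemma sum_deg:
  assumes G: "is_gluing m gl"
  shows "(\<Sum>v\<in>punctures m gl. degree m gl v) = 3 * m"
proof -
  have d: "degree m gl v = card v" if vP: "v \<in> punctures m gl" for v
  proof -
    obtain s where "s \<in> sides m" "v = vertex_of m gl s" using vP unfolding punctures_img by blast
    then show ?thesis using degree_eq[OF G] by simp
  qed
  have U: "\<Union>(punctures m gl) = sides m"
  proof
    show "\<Union>(punctures m gl) \<subseteq> sides m"
      using vertex_of_sub[OF G] unfolding punctures_img by blast
    show "sides m \<subseteq> \<Union>(punctures m gl)"
    proof
      fix s assume "s \<in> sides m"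
      moreover have "s \<in> vertex_of m gl s" unfolding vertex_of_def using vr_refl by blast
      ultimately show "s \<in> \<Union>(punctures m gl)" unfolding punctures_img by blast
    qed
  qed
  have fin: "finite (punctures m gl)" unfolding punctures_img by (simp add: finite_sides)
  have disj: "\<forall>A\<in>punctures m gl. \<forall>B\<in>punctures m gl. A \<noteq> B \<longrightarrow> A \<inter> B = {}"
  proof (intro ballI impI)
    fix A B assume AB: "A \<in> punctures m gl" "B \<in> punctures m gl" "A \<noteq> B"
    then obtain a b where ab: "A = vertex_of m gl a" "B = vertex_of m gl b"
      unfolding punctures_img by blast
    show "A \<inter> B = {}"
    proof (rule ccontr)
      assume "A \<inter> B \<noteq> {}"
      then obtain x where "(a, x) \<in> vert_rel m gl" "(b, x) \<in> vert_rel m gl"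
        using ab unfolding vertex_of_def by blast
      then have "(a, b) \<in> vert_rel m gl" using vr_sym vr_trans by metis
      then show False using ab AB(3) vertex_of_eq by blast
    qed
  qed
  have "(\<Sum>v\<in>punctures m gl. degree m gl v) = (\<Sum>v\<in>punctures m gl. card v)"
    using d by simp
  also have "\<dots> = card (\<Union>(punctures m gl))"
  proof (rule card_Union_disjoint[symmetric])
    show "pairwise disjnt (punctures m gl)" using disj unfolding pairwise_def disjnt_def by blast
    fix v assume "v \<in> punctures m gl"
    then have "v \<subseteq> sides m" using U by blast
    then show "finite v" using finite_sides finite_subset by blast
  qed
  also have "\<dots> = 3 * m" using U card_sides by simp
  finally show ?thesis .
qed




lemma sides2_cases:
  assumes "s \<in> sides (2*k)"
  obtains j where "j < k" and "s = (2*j,0) \<or> s = (2*j,1) \<or> s = (2*j,2) \<or> s = (2*j+1,0) \<or> s = (2*j+1,1) \<or> s = (2*j+1,2)"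
proof -
  obtain t i where s: "s = (t, i)" "t < 2*k" "i < 3" using assms by (cases s) (auto simp: sides_def)
  have "i = 0 \<or> i = 1 \<or> i = 2" using s by auto
  moreover have "t = 2*(t div 2) \<or> t = 2*(t div 2) + 1" by presburger
  moreover have "t div 2 < k" using s by auto
  ultimately show ?thesis using that s by metis
qed

lemma in_sides2: "(a, b) \<in> sides m \<longleftrightarrow> a < m \<and> b < 3"
  by (simp add: sides_def)

definition sucm :: "nat \<Rightarrow> nat \<Rightarrow> nat" where "sucm k j = (if j + 1 = k then 0 else j + 1)"
definition predm :: "nat \<Rightarrow> nat \<Rightarrow> nat" where "predm k j = (if j = 0 then k - 1 else j - 1)"

lemma sucm_lt: "j < k \<Longrightarrow> sucm k j < k" by (auto simp: sucm_def)
lemma predm_lt: "j < k \<Longrightarrow> predm k j < k" by (auto simp: predm_def)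
lemma sucm_predm: "j < k \<Longrightarrow> sucm k (predm k j) = j" by (auto simp: sucm_def predm_def)
lemma predm_sucm: "j < k \<Longrightarrow> predm k (sucm k j) = j" by (auto simp: sucm_def predm_def)

section \<open>Annulus family (genus g >= 1)\<close>

definition piA :: "nat \<Rightarrow> nat \<Rightarrow> nat" where
  "piA g x = (if 1 \<le> x \<and> x + 2 \<le> 2*g then (if odd x then x + 1 else x - 1) else x)"

lemma piA_inv: "piA g (piA g x) = x"
  unfolding piA_def by (auto; presburger)

lemma piA_lt: "x < k \<Longrightarrow> 2*g \<le> k + 1 \<Longrightarrow> piA g x < k"
  unfolding piA_def by (auto; presburger)

definition glA :: "nat \<Rightarrow> nat \<Rightarrow> nat \<times> nat \<Rightarrow> nat \<times> nat" where
  "glA k g s = (let t = fst s; i = snd s; j = t div 2 in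
     if even t then (if i = 0 then (2 * piA g j + 1, 2) else if i = 1 then (t + 1, 0) else (2 * predm k j + 1, 1))
     else (if i = 0 then (t - 1, 1) else if i = 1 then (2 * sucm k j, 2) else (2 * piA g j, 0)))"

lemma glA_simps:
  "glA k g (2*j, 0) = (2 * piA g j + 1, 2)"
  "glA k g (2*j, Suc 0) = (2*j + 1, 0)"
  "glA k g (2*j, 2) = (2 * predm k j + 1, 1)"
  "glA k g (2*j+1, 0) = (2*j, 1)"
  "glA k g (2*j+1, Suc 0) = (2 * sucm k j, 2)"
  "glA k g (2*j+1, 2) = (2 * piA g j, 0)"
  by (simp_all add: glA_def)

lemma side_end_simps:
  "side_end (a, 0) = (a, 1)" "side_end (a, Suc 0) = (a, 2)" "side_end (a, 2) = (a, 0)"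
  by (simp_all add: side_end_def)

lemma rotA:
  "rot (glA k g) (2*j, 0) = (Suc (2 * piA g j), 0)"
  "rot (glA k g) (2*j, Suc 0) = (Suc (2*j), Suc 0)"
  "rot (glA k g) (2*j, 2) = (Suc (2 * predm k j), 2)"
  "rot (glA k g) (Suc (2*j), 0) = (2*j, 2)"
  "rot (glA k g) (Suc (2*j), Suc 0) = (2 * sucm k j, 0)"
  "rot (glA k g) (Suc (2*j), 2) = (2 * piA g j, 1)"
  apply (simp add: rot_def glA_def side_end_def)
  apply (simp add: rot_def glA_def side_end_def)
  apply (simp add: rot_def glA_def side_end_def)
  apply (simp add: rot_def glA_def side_end_def)
  apply (simp add: rot_def glA_def side_end_def)
  apply (simp add: rot_def glA_def side_end_def)
  done

lemma gluingA:
  assumes k: "0 < k" "2*g \<le> k + 1"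
  shows "is_gluing (2*k) (glA k g)"
proof -
  have "glA k g s \<in> sides (2*k) \<and> glA k g s \<noteq> s \<and> glA k g (glA k g s) = s" if s: "s \<in> sides (2*k)" for s
  proof -
  from s obtain j where j: "j < k" and c: "s = (2*j,0) \<or> s = (2*j,1) \<or> s = (2*j,2) \<or> s = (2*j+1,0) \<or> s = (2*j+1,1) \<or> s = (2*j+1,2)"
    by (rule sides2_cases)
  have p: "piA g j < k" using piA_lt[OF j k(2)] .
  have a: "sucm k j < k" "predm k j < k" using j by (simp_all add: sucm_lt predm_lt)
  have eqs: "(2 * piA g j + 1) div 2 = piA g j" "(2 * predm k j + 1) div 2 = predm k j" by simp_all
  show "glA k g s \<in> sides (2*k) \<and> glA k g s \<noteq> s \<and> glA k g (glA k g s) = s"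
    using c
  proof (elim disjE)
    assume "s = (2*j,0)" then show ?thesis using p
      by (simp add: glA_simps in_sides2 piA_inv) (simp add: glA_def piA_inv)
  next
    assume "s = (2*j,1)" then show ?thesis using j
      by (simp add: glA_def in_sides2)
  next
    assume "s = (2*j,2)" then show ?thesis using j a
      by (simp add: glA_def in_sides2 sucm_predm)
  next
    assume "s = (2*j+1,0)" then show ?thesis using j
      by (simp add: glA_def in_sides2)
  next
    assume "s = (2*j+1,1)" then show ?thesis using j a
      by (simp add: glA_def in_sides2 predm_sucm)
  next
    assume "s = (2*j+1,2)" then show ?thesis using j p
      by (simp add: glA_def in_sides2 piA_inv)
  qed
  qed
  then show ?thesis using k unfolding is_gluing_def by simp
qed


definition clsA :: "nat \<Rightarrow> nat \<Rightarrow> nat \<Rightarrow> nat" where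
  "clsA n g y = (if n = 1 then 1 else if 1 \<le> y \<and> y + 1 \<le> 2*g then 1 else y)"

definition labA :: "nat \<Rightarrow> nat \<Rightarrow> nat \<Rightarrow> nat \<times> nat \<Rightarrow> nat" where
  "labA k g n s = (let t = fst s; i = snd s; j = t div 2 in
     if even t then (if i = 0 then clsA n g j else if i = 1 then clsA n g (sucm k j) else clsA n g (piA g j))
     else (if i = 0 then clsA n g (piA g j) else if i = 1 then clsA n g (sucm k j) else clsA n g (piA g (sucm k j))))"

lemma labA_simps:
  "labA k g n (2*j, 0) = clsA n g j"
  "labA k g n (2*j, Suc 0) = clsA n g (sucm k j)"
  "labA k g n (2*j, 2) = clsA n g (piA g j)"
  "labA k g n (Suc (2*j), 0) = clsA n g (piA g j)"
  "labA k g n (Suc (2*j), Suc 0) = clsA n g (sucm k j)"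
  "labA k g n (Suc (2*j), 2) = clsA n g (piA g (sucm k j))"
  by (simp_all add: labA_def)

lemma keyC:
  assumes "1 \<le> g" "1 \<le> n" "k = n + 2*g - 2" "j < k"
  shows "clsA n g (sucm k (piA g j)) = clsA n g (piA g (sucm k j))"
  using assms unfolding clsA_def sucm_def piA_def by (auto; presburger)


context
  fixes g n k :: nat
  assumes g1: "1 \<le> g" and n1: "1 \<le> n" and kdef: "k = n + 2*g - 2"
begin

lemma kpos: "0 < k" and k2g: "2*g \<le> k + 1" using g1 n1 kdef by auto

abbreviation "GA \<equiv> glA k g"
abbreviation "VR \<equiv> vert_rel (2*k) (glA k g)"
abbreviation "LA \<equiv> labA k g n"
abbreviation "CL \<equiv> clsA n g"

lemma GlA: "is_gluing (2*k) GA" using gluingA[OF kpos k2g] .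

lemma pl: "y < k \<Longrightarrow> piA g y < k" using piA_lt[OF _ k2g] .

lemma invA: "\<forall>s\<in>sides (2*k). LA (rot GA s) = LA s"
proof
  fix s assume s: "s \<in> sides (2*k)"
  from s obtain j where j: "j < k" and c: "s = (2*j,0) \<or> s = (2*j,1) \<or> s = (2*j,2) \<or> s = (Suc (2*j),0) \<or> s = (Suc (2*j),1) \<or> s = (Suc (2*j),2)"
    by (rule sides2_cases) simp
  have C: "CL (sucm k (piA g j)) = CL (piA g (sucm k j))" by (rule keyC[OF g1 n1 kdef j])
  show "LA (rot GA s) = LA s"
    using c j C by (elim disjE) (simp_all add: rotA labA_simps piA_inv sucm_predm)
qed

lemma stepA: "s \<in> sides (2*k) \<Longrightarrow> rot GA s = x \<Longrightarrow> (s, x) \<in> VR"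
  using vr_step by blast

lemma stepA': "s \<in> sides (2*k) \<Longrightarrow> rot GA s = x \<Longrightarrow> (x, s) \<in> VR"
  using vr_step vr_sym by blast

lemma memA: "j < k \<Longrightarrow> i < 3 \<Longrightarrow> (2*j, i) \<in> sides (2*k)" "j < k \<Longrightarrow> i < 3 \<Longrightarrow> (Suc (2*j), i) \<in> sides (2*k)"
  by (simp_all add: in_sides2)

lemma trA: "(a, b) \<in> VR \<Longrightarrow> (b, c) \<in> VR \<Longrightarrow> (a, c) \<in> VR" by (rule vr_trans)

lemma corner_b:
  assumes s: "s \<in> sides (2*k)"
  shows "\<exists>y<k. CL y = LA s \<and> (s, (2*y, 0)) \<in> VR"
proof -
  from s obtain j where j: "j < k" and c: "s = (2*j,0) \<or> s = (2*j,1) \<or> s = (2*j,2) \<or> s = (Suc (2*j),0) \<or> s = (Suc (2*j),1) \<or> s = (Suc (2*j),2)"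
    by (rule sides2_cases) simp
  have sj: "sucm k j < k" "predm k j < k" "piA g j < k" using j by (simp_all add: sucm_lt predm_lt pl)
  have spj: "sucm k (piA g j) < k" using sj by (simp add: sucm_lt)
  have C: "CL (sucm k (piA g j)) = CL (piA g (sucm k j))" by (rule keyC[OF g1 n1 kdef j])
  show ?thesis using c
  proof (elim disjE)
    assume h: "s = (2*j,0)" show ?thesis using h j vr_refl by (auto simp: labA_simps)
  next
    assume h: "s = (2*j,1)"
    have "((2*j,1), (Suc (2*j), 1)) \<in> VR" by (rule stepA) (use j in \<open>simp_all add: memA rotA\<close>)
    moreover have "((Suc (2*j), 1), (2 * sucm k j, 0)) \<in> VR" by (rule stepA) (use j in \<open>simp_all add: memA rotA\<close>)
    ultimately show ?thesis using h sj by (auto simp: labA_simps intro: trA)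
  next
    assume h: "s = (2*j,2)"
    have "((2 * piA g j, 0), (Suc (2*j), 0)) \<in> VR" by (rule stepA) (use sj in \<open>simp_all add: memA rotA piA_inv\<close>)
    moreover have "((Suc (2*j), 0), (2*j, 2)) \<in> VR" by (rule stepA) (use j in \<open>simp_all add: memA rotA\<close>)
    ultimately have "((2*j, 2), (2 * piA g j, 0)) \<in> VR" by (blast intro: trA vr_sym)
    then show ?thesis using h sj by (auto simp: labA_simps)
  next
    assume h: "s = (Suc (2*j),0)"
    have "((2 * piA g j, 0), (Suc (2*j), 0)) \<in> VR" by (rule stepA) (use sj in \<open>simp_all add: memA rotA piA_inv\<close>)
    then show ?thesis using h sj by (auto simp: labA_simps intro: vr_sym)
  next
    assume h: "s = (Suc (2*j),1)"
    have "((Suc (2*j), 1), (2 * sucm k j, 0)) \<in> VR" by (rule stepA) (use j in \<open>simp_all add: memA rotA\<close>)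
    then show ?thesis using h sj by (auto simp: labA_simps)
  next
    assume h: "s = (Suc (2*j),2)"
    have "((Suc (2*j), 2), (2 * piA g j, 1)) \<in> VR" by (rule stepA) (use j in \<open>simp_all add: memA rotA\<close>)
    moreover have "((2 * piA g j, 1), (Suc (2 * piA g j), 1)) \<in> VR" by (rule stepA) (use sj in \<open>simp_all add: memA rotA\<close>)
    moreover have "((Suc (2 * piA g j), 1), (2 * sucm k (piA g j), 0)) \<in> VR" by (rule stepA) (use sj in \<open>simp_all add: memA rotA\<close>)
    ultimately have "(s, (2 * sucm k (piA g j), 0)) \<in> VR" using h by (blast intro: trA)
    then show ?thesis using h spj C by (auto simp: labA_simps)
  qed
qed

lemma edgeE:
  assumes j: "j < k"
  shows "((2 * piA g (sucm k j), 0), (2 * sucm k (piA g j), 0)) \<in> VR"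
proof -
  let ?j = "sucm k j"
  have sj: "?j < k" "piA g ?j < k" "piA g j < k" using j by (simp_all add: sucm_lt pl)
  have pj: "predm k ?j = j" using j by (simp add: predm_sucm)
  have "((2 * piA g ?j, 0), (Suc (2*?j), 0)) \<in> VR" by (rule stepA) (use sj in \<open>simp_all add: memA rotA piA_inv\<close>)
  moreover have "((Suc (2*?j), 0), (2*?j, 2)) \<in> VR" by (rule stepA) (use sj in \<open>simp_all add: memA rotA\<close>)
  moreover have "((2*?j, 2), (Suc (2*j), 2)) \<in> VR" by (rule stepA) (use sj pj in \<open>simp_all add: memA rotA\<close>)
  moreover have "((Suc (2*j), 2), (2 * piA g j, 1)) \<in> VR" by (rule stepA) (use j in \<open>simp_all add: memA rotA\<close>)
  moreover have "((2 * piA g j, 1), (Suc (2 * piA g j), 1)) \<in> VR" by (rule stepA) (use sj in \<open>simp_all add: memA rotA\<close>)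
  moreover have "((Suc (2 * piA g j), 1), (2 * sucm k (piA g j), 0)) \<in> VR" by (rule stepA) (use sj in \<open>simp_all add: memA rotA\<close>)
  ultimately show ?thesis by (blast intro: trA)
qed

lemma step2:
  assumes y: "1 \<le> y" "y + 3 \<le> 2*g" "y + 2 < k"
  shows "((2*y, 0), (2*(y+2), 0)) \<in> VR"
proof -
  have e: "((2 * piA g (sucm k y), 0), (2 * sucm k (piA g y), 0)) \<in> VR" by (rule edgeE) (use y in simp)
  have a: "piA g (sucm k y) = (if odd y then y else y+2)" "sucm k (piA g y) = (if odd y then y+2 else y)"
    using y unfolding sucm_def piA_def by (auto; presburger)+
  show ?thesis
  proof (cases "odd y")
    case True then show ?thesis using e a by simp
  next
    case False then show ?thesis using e a vr_sym by simp
  qed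
qed

lemma step21:
  assumes "2 \<le> g" "2 < k"
  shows "((2*2, 0), (2*1, 0)) \<in> VR"
proof -
  have e: "((2 * piA g (sucm k 0), 0), (2 * sucm k (piA g 0), 0)) \<in> VR" by (rule edgeE) (use assms in simp)
  have "sucm k 0 = 1" "piA g 1 = 2" "piA g 0 = 0" using assms by (auto simp: sucm_def piA_def)
  then show ?thesis using e by simp
qed

lemma block:
  "1 \<le> y \<Longrightarrow> y + 1 \<le> 2*g \<Longrightarrow> y < k \<Longrightarrow> ((2*y, 0), (2*1, 0)) \<in> VR"
proof (induction y rule: less_induct)
  case (less y)
  show ?case
  proof (cases "y \<le> 2")
    case True
    then have "y = 1 \<or> y = 2" using less.prems by auto
    then show ?thesis
    proof
      assume "y = 1" then show ?thesis using vr_refl by simp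
    next
      assume "y = 2" then show ?thesis using step21 less.prems by simp
    qed
  next
    case False
    then have "((2*(y-2), 0), (2*1, 0)) \<in> VR" using less by simp
    moreover have "((2*(y-2), 0), (2*(y-2+2), 0)) \<in> VR" by (rule step2) (use False less.prems in auto)
    ultimately show ?thesis using False vr_sym trA by (metis le_add_diff_inverse2 nat_le_linear)
  qed
qed

definition repA :: "nat \<Rightarrow> nat \<times> nat" where
  "repA l = (2 * (if n = 1 then 0 else l), 0)"

lemma brep:
  assumes y: "y < k"
  shows "((2*y, 0), repA (CL y)) \<in> VR"
proof (cases "n = 1")
  case True
  then have r: "repA (CL y) = (2*0, 0)" unfolding repA_def by simp
  show ?thesis
  proof (cases "y = 0")
    case True then show ?thesis using r vr_refl by simp
  next
    case False
    then have g2: "2 \<le> g" and kk: "k = 2*g - 1" using y kdef \<open>n = 1\<close> g1 by auto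
    have b1: "((2*y, 0), (2*1, 0)) \<in> VR" by (rule block) (use False y kk in auto)
    have e: "((2 * piA g (sucm k (k-1)), 0), (2 * sucm k (piA g (k-1)), 0)) \<in> VR"
      by (rule edgeE) (use kk g2 in simp)
    have "sucm k (k-1) = 0" "piA g 0 = 0" "piA g (k-1) = 2*g-3" "sucm k (2*g-3) = 2*g-2"
      using kk g2 unfolding sucm_def piA_def by (auto; presburger)+
    then have e': "((2*0, 0), (2*(2*g-2), 0)) \<in> VR" using e by simp
    have b2: "((2*(2*g-2), 0), (2*1, 0)) \<in> VR" by (rule block) (use kk g2 in auto)
    show ?thesis using r b1 e' b2 vr_sym trA by metis
  qed
next
  case False
  show ?thesis
  proof (cases "1 \<le> y \<and> y + 1 \<le> 2*g")
    case True
    then have "repA (CL y) = (2*1, 0)" using False unfolding repA_def clsA_def by simp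
    then show ?thesis using block True y by simp
  next
    case F2: False
    then have "repA (CL y) = (2*y, 0)" using False unfolding repA_def clsA_def by auto
    then show ?thesis using vr_refl by simp
  qed
qed

lemma conA: "\<forall>s\<in>sides (2*k). (s, repA (LA s)) \<in> VR"
proof
  fix s assume s: "s \<in> sides (2*k)"
  then obtain y where "y < k" "CL y = LA s" "(s, (2*y, 0)) \<in> VR" using corner_b by blast
  then show "(s, repA (LA s)) \<in> VR" using brep trA by metis
qed

lemma imgA: "LA ` sides (2*k) = CL ` {..<k}"
proof
  show "LA ` sides (2*k) \<subseteq> CL ` {..<k}"
  proof
    fix x assume "x \<in> LA ` sides (2*k)"
    then obtain s where "s \<in> sides (2*k)" "x = LA s" by blast
    then obtain y where "y < k" "CL y = x" using corner_b by blast
    then show "x \<in> CL ` {..<k}" by blast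
  qed
  show "CL ` {..<k} \<subseteq> LA ` sides (2*k)"
  proof
    fix x assume "x \<in> CL ` {..<k}"
    then obtain y where "y < k" "x = CL y" by auto
    then have "(2*y, 0) \<in> sides (2*k)" "LA (2*y,0) = x" by (simp_all add: in_sides2 labA_simps)
    then show "x \<in> LA ` sides (2*k)" by (metis imageI)
  qed
qed

lemma cardCL: "card (CL ` {..<k}) = n"
proof (cases "n = 1")
  case True
  have c1: "CL y = 1" for y using True unfolding clsA_def by simp
  have "CL ` {..<k} = {1}"
  proof
    show "CL ` {..<k} \<subseteq> {1}" using c1 by blast
    have "CL 0 \<in> CL ` {..<k}" using kpos by blast
    then show "{1} \<subseteq> CL ` {..<k}" using c1 by simp
  qed
  then show ?thesis using True by simp
next
  case False
  have "CL ` {..<k} = insert 0 (insert 1 {2*g..<k})"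
  proof
    show "CL ` {..<k} \<subseteq> insert 0 (insert 1 {2*g..<k})"
    proof
      fix x assume "x \<in> CL ` {..<k}"
      then obtain y where y: "y < k" "x = CL y" by blast
      then show "x \<in> insert 0 (insert 1 {2*g..<k})" using False unfolding clsA_def by auto
    qed
    have k: "0 < k" "1 < k" "2*g \<le> k" using False n1 g1 kdef by auto
    have c: "CL 0 = 0" "CL 1 = 1" using False g1 unfolding clsA_def by auto
    have c2: "CL y = y" if "2*g \<le> y" for y using that False unfolding clsA_def by auto
    show "insert 0 (insert 1 {2*g..<k}) \<subseteq> CL ` {..<k}"
    proof
      fix x assume "x \<in> insert 0 (insert 1 {2*g..<k})"
      then have "x = 0 \<or> x = 1 \<or> (2*g \<le> x \<and> x < k)" by auto
      then have "x < k \<and> CL x = x" using k c c2 by auto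
      then show "x \<in> CL ` {..<k}" by (metis lessThan_iff rev_image_eqI)
    qed
  qed
  moreover have "card (insert 0 (insert 1 {2*g..<k})) = 2 + (k - 2*g)"
    using g1 by simp
  ultimately show ?thesis using False n1 kdef by simp
qed

lemma classA:
  assumes s: "s \<in> sides (2*k)"
  shows "4 \<le> card {t\<in>sides (2*k). LA t = LA s}"
proof -
  obtain y where y: "y < k" "CL y = LA s" using corner_b[OF s] by blast
  let ?p = "predm k y"
  have p: "?p < k" "piA g y < k" using y by (simp_all add: predm_lt pl)
  let ?Q = "{(2*y,0), (2*?p,1), (Suc (2*?p),1), (2*piA g y, 2::nat)}"
  have "?Q \<subseteq> {t\<in>sides (2*k). LA t = LA s}"
    using y p by (simp add: in_sides2 labA_simps sucm_predm piA_inv)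
  moreover have "card ?Q = 4" by simp
  moreover have "finite {t\<in>sides (2*k). LA t = LA s}" using finite_sides by simp
  ultimately have "card ?Q \<le> card {t\<in>sides (2*k). LA t = LA s}" using card_mono by blast
  then show ?thesis using \<open>card ?Q = 4\<close> by simp
qed

lemma connA: "tri_connected (2*k) GA"
proof (rule tri_conn_chain)
  have ev: "(2*j, 2*j+1) \<in> tri_adj (2*k) GA \<and> (2*j+1, 2*j) \<in> tri_adj (2*k) GA" if "j < k" for j
  proof -
    have "(fst (2*j, 1::nat), fst (Suc (2*j), 0::nat)) \<in> tri_adj (2*k) GA"
      by (rule adjI) (use that in \<open>simp_all add: in_sides2 glA_def\<close>)
    moreover have "(fst (Suc (2*j), 0::nat), fst (2*j, 1::nat)) \<in> tri_adj (2*k) GA"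
      by (rule adjI) (use that in \<open>simp_all add: in_sides2 glA_def\<close>)
    ultimately show ?thesis by simp
  qed
  have od: "(2*j+1, 2*j+2) \<in> tri_adj (2*k) GA \<and> (2*j+2, 2*j+1) \<in> tri_adj (2*k) GA" if "j + 1 < k" for j
  proof -
    have sj: "sucm k j = j + 1" "predm k (j + 1) = j" using that by (simp_all add: sucm_def predm_def)
    have "(fst (Suc (2*j), 1::nat), fst (2*(j+1), 2::nat)) \<in> tri_adj (2*k) GA"
      by (rule adjI) (use that sj in \<open>simp_all add: in_sides2 glA_def\<close>)
    moreover have "(fst (2*(j+1), 2::nat), fst (Suc (2*j), 1::nat)) \<in> tri_adj (2*k) GA"
      by (rule adjI) (use that sj in \<open>simp_all add: in_sides2 glA_def\<close>)
    ultimately show ?thesis by simp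
  qed
  fix t assume t: "t + 1 < 2*k"
  obtain j where "t = 2*j \<or> t = 2*j+1" by (metis dvd_mult_div_cancel odd_two_times_div_two_succ)
  then show "(t, t+1) \<in> tri_adj (2*k) GA \<and> (t+1, t) \<in> tri_adj (2*k) GA"
  proof
    assume "t = 2*j" then show ?thesis using ev[of j] t by simp
  next
    assume h: "t = 2*j+1"
    then have "j + 1 < k" using t by simp
    then show ?thesis using od[of j] h by (simp add: numeral_2_eq_2)
  qed
qed

theorem famA: "ideal_triangulation g n (2*k) GA \<and> T4 (2*k) GA"
proof -
  note L = labeling[OF GlA invA conA]
  have cp: "card (punctures (2*k) GA) = n" using L(1) imgA cardCL by simp
  have na: "num_arcs (2*k) = 3*k" by (simp add: num_arcs_def card_sides)
  have eu: "int (card (punctures (2*k) GA)) - int (num_arcs (2*k)) + int (2*k) = 2 - 2 * int g"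
    using cp na kdef g1 by simp
  have t4: "T4 (2*k) GA"
    unfolding T4_def
  proof
    fix v assume "v \<in> punctures (2*k) GA"
    then obtain s where s: "s \<in> sides (2*k)" "v = vertex_of (2*k) GA s" unfolding punctures_img by blast
    then show "4 \<le> degree (2*k) GA v" using L(2)[OF s(1)] classA[OF s(1)] by simp
  qed
  show ?thesis unfolding ideal_triangulation_def using GlA connA cp eu t4 by simp
qed

end




lemma tri_conn_down:
  assumes "\<And>t. 0 < t \<Longrightarrow> t < m \<Longrightarrow> \<exists>t'<t. (t, t') \<in> tri_adj m gl \<and> (t', t) \<in> tri_adj m gl"
  shows "tri_connected m gl"
proof -
  have a: "t < m \<Longrightarrow> (0, t) \<in> (tri_adj m gl)\<^sup>* \<and> (t, 0) \<in> (tri_adj m gl)\<^sup>*" for t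
  proof (induction t rule: less_induct)
    case (less t)
    show ?case
    proof (cases "t = 0")
      case True then show ?thesis by simp
    next
      case False
      then obtain t' where "t' < t" "(t, t') \<in> tri_adj m gl" "(t', t) \<in> tri_adj m gl"
        using assms less.prems by blast
      moreover have "(0, t') \<in> (tri_adj m gl)\<^sup>* \<and> (t', 0) \<in> (tri_adj m gl)\<^sup>*"
        using less.IH calculation(1) less.prems by simp
      ultimately show ?thesis by (meson rtrancl.rtrancl_into_rtrancl converse_rtrancl_into_rtrancl)
    qed
  qed
  show ?thesis unfolding tri_connected_def using a by (meson rtrancl_trans)
qed

section \<open>Bipyramid family (sphere)\<close>

definition glB :: "nat \<Rightarrow> nat \<times> nat \<Rightarrow> nat \<times> nat" where
  "glB k s = (let t = fst s; i = snd s; j = t div 2 in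
     if even t then (if i = 0 then (2 * predm k j, 2) else if i = 1 then (Suc t, 1) else (2 * sucm k j, 0))
     else (if i = 0 then (Suc (2 * sucm k j), 2) else if i = 1 then (t - 1, 1) else (Suc (2 * predm k j), 0)))"

definition labB :: "nat \<Rightarrow> nat \<times> nat \<Rightarrow> nat" where
  "labB k s = (let t = fst s; i = snd s; j = t div 2 in
     if even t then (if i = 0 then 0 else if i = 1 then j + 2 else sucm k j + 2)
     else (if i = 0 then 1 else if i = 1 then sucm k j + 2 else j + 2))"

lemma labB_simps:
  "labB k (2*j, 0) = 0"
  "labB k (2*j, Suc 0) = j + 2"
  "labB k (2*j, 2) = sucm k j + 2"
  "labB k (Suc (2*j), 0) = 1"
  "labB k (Suc (2*j), Suc 0) = sucm k j + 2"
  "labB k (Suc (2*j), 2) = j + 2"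
  by (simp_all add: labB_def)

lemma rotB:
  "rot (glB k) (2*j, 0) = (2 * predm k j, 0)"
  "rot (glB k) (2*j, Suc 0) = (Suc (2*j), 2)"
  "rot (glB k) (2*j, 2) = (2 * sucm k j, Suc 0)"
  "rot (glB k) (Suc (2*j), 0) = (Suc (2 * sucm k j), 0)"
  "rot (glB k) (Suc (2*j), Suc 0) = (2*j, 2)"
  "rot (glB k) (Suc (2*j), 2) = (Suc (2 * predm k j), Suc 0)"
  by (simp_all add: rot_def glB_def side_end_def)

context
  fixes k :: nat
  assumes k3: "3 \<le> k"
begin

abbreviation "GB \<equiv> glB k"
abbreviation "VB \<equiv> vert_rel (2*k) (glB k)"
abbreviation "LB \<equiv> labB k"

lemma gluingB: "is_gluing (2*k) GB"
proof -
  have "GB s \<in> sides (2*k) \<and> GB s \<noteq> s \<and> GB (GB s) = s" if s: "s \<in> sides (2*k)" for s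
  proof -
    from s obtain j where j: "j < k" and c: "s = (2*j,0) \<or> s = (2*j,1) \<or> s = (2*j,2) \<or> s = (Suc (2*j),0) \<or> s = (Suc (2*j),1) \<or> s = (Suc (2*j),2)"
      by (rule sides2_cases) simp
    have a: "sucm k j < k" "predm k j < k" using j by (simp_all add: sucm_lt predm_lt)
    show ?thesis using c j a
      by (elim disjE) (simp_all add: glB_def in_sides2 sucm_predm predm_sucm)
  qed
  then show ?thesis using k3 unfolding is_gluing_def by simp
qed

lemma invB: "\<forall>s\<in>sides (2*k). LB (rot GB s) = LB s"
proof
  fix s assume s: "s \<in> sides (2*k)"
  from s obtain j where j: "j < k" and c: "s = (2*j,0) \<or> s = (2*j,1) \<or> s = (2*j,2) \<or> s = (Suc (2*j),0) \<or> s = (Suc (2*j),1) \<or> s = (Suc (2*j),2)"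
    by (rule sides2_cases) simp
  show "LB (rot GB s) = LB s"
    using c j by (elim disjE) (simp_all add: rotB labB_simps sucm_predm)
qed

definition repB :: "nat \<Rightarrow> nat \<times> nat" where
  "repB l = (if l = 0 then (0, 0) else if l = 1 then (1, 0) else (2 * (l - 2), 1))"

lemma stepB: "s \<in> sides (2*k) \<Longrightarrow> rot GB s = x \<Longrightarrow> (s, x) \<in> VB"
  using vr_step by blast

lemma Nchain: "j < k \<Longrightarrow> ((2*j, 0), (0, 0)) \<in> VB"
proof (induction j)
  case 0 then show ?case using vr_refl by simp
next
  case (Suc j)
  have "((2 * Suc j, 0), (2*j, 0)) \<in> VB"
    by (rule stepB) (use Suc.prems in \<open>simp_all add: in_sides2 predm_def rot_def glB_def side_end_def\<close>)
  then show ?case using Suc vr_trans by simp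
qed

lemma Schain: "j < k \<Longrightarrow> ((Suc (2*j), 0), (1, 0)) \<in> VB"
proof (induction j)
  case 0 then show ?case using vr_refl by simp
next
  case (Suc j)
  have "((Suc (2*j), 0), (Suc (2 * Suc j), 0)) \<in> VB"
    by (rule stepB) (use Suc.prems in \<open>simp_all add: in_sides2 sucm_def rot_def glB_def side_end_def\<close>)
  then show ?case using Suc vr_trans vr_sym by (metis Suc_lessD)
qed

lemma conB: "\<forall>s\<in>sides (2*k). (s, repB (LB s)) \<in> VB"
proof
  fix s assume s: "s \<in> sides (2*k)"
  from s obtain j where j: "j < k" and c: "s = (2*j,0) \<or> s = (2*j,1) \<or> s = (2*j,2) \<or> s = (Suc (2*j),0) \<or> s = (Suc (2*j),1) \<or> s = (Suc (2*j),2)"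
    by (rule sides2_cases) simp
  have a: "sucm k j < k" "predm k j < k" using j by (simp_all add: sucm_lt predm_lt)
  show "(s, repB (LB s)) \<in> VB" using c
  proof (elim disjE)
    assume "s = (2*j,0)" then show ?thesis using Nchain j by (simp add: labB_simps repB_def)
  next
    assume "s = (2*j,1)" then show ?thesis using vr_refl by (simp add: labB_simps repB_def)
  next
    assume h: "s = (2*j,2)"
    have "((2*j,2), (2 * sucm k j, 1)) \<in> VB" by (rule stepB) (use j in \<open>simp_all add: in_sides2 rotB\<close>)
    then show ?thesis using h by (simp add: labB_simps repB_def)
  next
    assume "s = (Suc (2*j),0)" then show ?thesis using Schain j by (simp add: labB_simps repB_def)
  next
    assume h: "s = (Suc (2*j),1)"
    have "((Suc (2*j),1), (2*j, 2)) \<in> VB" by (rule stepB) (use j in \<open>simp_all add: in_sides2 rotB\<close>)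
    moreover have "((2*j,2), (2 * sucm k j, 1)) \<in> VB" by (rule stepB) (use j in \<open>simp_all add: in_sides2 rotB\<close>)
    ultimately show ?thesis using h vr_trans by (simp add: labB_simps repB_def)
  next
    assume h: "s = (Suc (2*j),2)"
    have "((Suc (2*j),2), (Suc (2 * predm k j), 1)) \<in> VB" by (rule stepB) (use j in \<open>simp_all add: in_sides2 rotB\<close>)
    moreover have "((Suc (2 * predm k j), 1), (2 * predm k j, 2)) \<in> VB" by (rule stepB) (use a in \<open>simp_all add: in_sides2 rotB\<close>)
    moreover have "((2 * predm k j, 2), (2*j, 1)) \<in> VB" by (rule stepB) (use a j in \<open>simp_all add: in_sides2 rotB sucm_predm\<close>)
    ultimately have "(s, (2*j, 1)) \<in> VB" using h vr_trans by blast
    then show ?thesis using h by (simp add: labB_simps repB_def)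
  qed
qed

lemma labB_cases:
  assumes s: "s \<in> sides (2*k)"
  shows "LB s = 0 \<or> LB s = 1 \<or> (\<exists>j<k. LB s = j + 2)"
proof -
  from s obtain j where j: "j < k" and c: "s = (2*j,0) \<or> s = (2*j,1) \<or> s = (2*j,2) \<or> s = (Suc (2*j),0) \<or> s = (Suc (2*j),1) \<or> s = (Suc (2*j),2)"
    by (rule sides2_cases) simp
  have a: "sucm k j < k" using j by (simp add: sucm_lt)
  show ?thesis using c j a by (elim disjE) (auto simp: labB_simps)
qed

lemma imgB: "LB ` sides (2*k) = {..<k+2}"
proof
  show "LB ` sides (2*k) \<subseteq> {..<k+2}" using labB_cases by fastforce
  show "{..<k+2} \<subseteq> LB ` sides (2*k)"
  proof
    fix l assume l: "l \<in> {..<k+2}"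
    show "l \<in> LB ` sides (2*k)"
    proof (cases "l \<le> 1")
      case True
      then have "l = 0 \<or> l = 1" by auto
      then show ?thesis
      proof
        assume "l = 0"
        moreover have "(2*0, 0) \<in> sides (2*k)" "LB (2*0, 0) = 0" using k3 by (simp_all only: labB_simps in_sides2) auto
        ultimately show ?thesis by (metis imageI)
      next
        assume "l = 1"
        moreover have "(Suc (2*0), 0) \<in> sides (2*k)" "LB (Suc (2*0), 0) = 1" using k3 by (simp_all only: labB_simps in_sides2) auto
        ultimately show ?thesis by (metis imageI)
      qed
    next
      case False
      then have "(2*(l-2), 1) \<in> sides (2*k)" "LB (2*(l-2), 1) = l" using l by (simp_all add: in_sides2 labB_simps)
      then show ?thesis by (metis imageI)
    qed
  qed
qed

lemma classB:
  assumes s: "s \<in> sides (2*k)"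
  shows "(LB s \<le> 1 \<longrightarrow> k \<le> card {t\<in>sides (2*k). LB t = LB s}) \<and> (2 \<le> LB s \<longrightarrow> 4 \<le> card {t\<in>sides (2*k). LB t = LB s})"
proof -
  have fin: "finite {t\<in>sides (2*k). LB t = LB s}" using finite_sides by simp
  consider "LB s = 0" | "LB s = 1" | j where "j < k" "LB s = j + 2" using labB_cases[OF s] by (elim disjE exE conjE) auto
  then show ?thesis
  proof cases
    case 1
    have sub: "(\<lambda>j. (2*j, 0::nat)) ` {..<k} \<subseteq> {t\<in>sides (2*k). LB t = LB s}" using 1 by (auto simp: in_sides2 labB_simps)
    have c: "card ((\<lambda>j. (2*j, 0::nat)) ` {..<k}) = k" by (simp add: card_image inj_on_def)
    have "k \<le> card {t\<in>sides (2*k). LB t = LB s}" using card_mono[OF fin sub] c by simp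
    then show ?thesis using 1 by simp
  next
    case 2
    have sub: "(\<lambda>j. (Suc (2*j), 0::nat)) ` {..<k} \<subseteq> {t\<in>sides (2*k). LB t = LB s}" using 2 by (auto simp: in_sides2 labB_simps)
    have c: "card ((\<lambda>j. (Suc (2*j), 0::nat)) ` {..<k}) = k" by (simp add: card_image inj_on_def)
    have "k \<le> card {t\<in>sides (2*k). LB t = LB s}" using card_mono[OF fin sub] c by simp
    then show ?thesis using 2 by simp
  next
    case 3
    let ?p = "predm k j"
    have p: "?p < k" using 3 by (simp add: predm_lt)
    let ?Q = "{(2*j,1), (Suc (2*j),2), (2*?p,2), (Suc (2*?p), 1::nat)}"
    have sub: "?Q \<subseteq> {t\<in>sides (2*k). LB t = LB s}" using 3 p by (simp add: in_sides2 labB_simps sucm_predm)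
    have ne: "2*j \<noteq> Suc (2*?p)" "Suc (2*j) \<noteq> 2*?p" by presburger+
    have c: "card ?Q = 4" using ne by simp
    have "4 \<le> card {t\<in>sides (2*k). LB t = LB s}" using card_mono[OF fin sub] c by simp
    then show ?thesis using 3 by simp
  qed
qed

lemma connB: "tri_connected (2*k) GB"
proof (rule tri_conn_down)
  fix t assume t: "0 < t" "t < 2*k"
  obtain j where "t = 2*j \<or> t = Suc (2*j)" by (metis dvd_mult_div_cancel odd_two_times_div_two_succ Suc_eq_plus1)
  then show "\<exists>t'<t. (t, t') \<in> tri_adj (2*k) GB \<and> (t', t) \<in> tri_adj (2*k) GB"
  proof
    assume h: "t = 2*j"
    then have j: "0 < j" "j < k" using t by auto
    then have pj: "predm k j = j - 1" "sucm k (j - 1) = j" by (auto simp: predm_def sucm_def)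
    have "(fst (2*j, 0::nat), fst (2*(j-1), 2::nat)) \<in> tri_adj (2*k) GB"
      by (rule adjI) (use j pj in \<open>simp_all add: in_sides2 glB_def\<close>)
    moreover have "(fst (2*(j-1), 2::nat), fst (2*j, 0::nat)) \<in> tri_adj (2*k) GB"
      by (rule adjI) (use j pj in \<open>simp_all add: in_sides2 glB_def\<close>)
    ultimately show ?thesis using h j by (intro exI[of _ "2*(j-1)"]) simp
  next
    assume h: "t = Suc (2*j)"
    then have j: "j < k" using t by auto
    have "(fst (Suc (2*j), 1::nat), fst (2*j, 1::nat)) \<in> tri_adj (2*k) GB"
      by (rule adjI) (use j in \<open>simp_all add: in_sides2 glB_def\<close>)
    moreover have "(fst (2*j, 1::nat), fst (Suc (2*j), 1::nat)) \<in> tri_adj (2*k) GB"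
      by (rule adjI) (use j in \<open>simp_all add: in_sides2 glB_def\<close>)
    ultimately show ?thesis using h by (intro exI[of _ "2*j"]) simp
  qed
qed

lemma famB_basic: "ideal_triangulation 0 (k+2) (2*k) GB"
proof -
  note L = labeling[OF gluingB invB conB]
  have cp: "card (punctures (2*k) GB) = k + 2" using L(1) imgB by simp
  have na: "num_arcs (2*k) = 3*k" by (simp add: num_arcs_def card_sides)
  show ?thesis unfolding ideal_triangulation_def using gluingB connB cp na by simp
qed

lemma degB:
  assumes s: "s \<in> sides (2*k)"
  shows "degree (2*k) GB (vertex_of (2*k) GB s) = card {t\<in>sides (2*k). LB t = LB s}"
  using labeling(2)[OF gluingB invB conB s] .

lemma famB_T4: "4 \<le> k \<Longrightarrow> T4 (2*k) GB"
  unfolding T4_def punctures_img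
proof
  fix v assume k4: "4 \<le> k" and "v \<in> vertex_of (2*k) GB ` sides (2*k)"
  then obtain s where s: "s \<in> sides (2*k)" "v = vertex_of (2*k) GB s" by blast
  show "4 \<le> degree (2*k) GB v" using classB[OF s(1)] degB[OF s(1)] s(2) k4 by (cases "LB s \<le> 1") auto
qed

lemma famB_T3half: "T3half (2*k) GB"
proof -
  have t3: "T3 (2*k) GB"
    unfolding T3_def punctures_img
  proof
    fix v assume "v \<in> vertex_of (2*k) GB ` sides (2*k)"
    then obtain s where s: "s \<in> sides (2*k)" "v = vertex_of (2*k) GB s" by blast
    show "3 \<le> degree (2*k) GB v" using classB[OF s(1)] degB[OF s(1)] s(2) k3 by (cases "LB s \<le> 1") auto
  qed
  have "4 \<le> degree (2*k) GB (vertex_of (2*k) GB (side_start s)) \<or> 4 \<le> degree (2*k) GB (vertex_of (2*k) GB (side_end s))"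
    if s: "s \<in> sides (2*k)" for s
  proof -
    from s obtain j where j: "j < k" and c: "s = (2*j,0) \<or> s = (2*j,1) \<or> s = (2*j,2) \<or> s = (Suc (2*j),0) \<or> s = (Suc (2*j),1) \<or> s = (Suc (2*j),2)"
      by (rule sides2_cases) simp
    define x where "x = (if snd s = 0 then side_end s else s)"
    have x: "x \<in> sides (2*k)" "2 \<le> LB x" "x = side_start s \<or> x = side_end s"
      using c j unfolding x_def by (elim disjE; simp add: in_sides2 labB_simps side_start_def side_end_def)+
    have "4 \<le> degree (2*k) GB (vertex_of (2*k) GB x)" using classB[OF x(1)] degB[OF x(1)] x(2) by simp
    then show ?thesis using x(3) by auto
  qed
  then show ?thesis using t3 unfolding T3half_def by blast
qed

end




section \<open>Tetrahedron\<close>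

definition glT :: "nat \<times> nat \<Rightarrow> nat \<times> nat" where
  "glT s = (if s = (0,0) then (2,2) else if s = (2,2) then (0,0)
    else if s = (0,1) then (3,2) else if s = (3,2) then (0,1)
    else if s = (0,2) then (1,0) else if s = (1,0) then (0,2)
    else if s = (1,1) then (3,1) else if s = (3,1) then (1,1)
    else if s = (1,2) then (2,0) else if s = (2,0) then (1,2)
    else if s = (2,1) then (3,0) else if s = (3,0) then (2,1) else s)"

definition labT :: "nat \<times> nat \<Rightarrow> nat" where
  "labT s = [[0,1,2],[0,2,3],[0,3,1],[1,3,2::nat]] ! fst s ! snd s"

definition repT :: "nat \<Rightarrow> nat \<times> nat" where
  "repT l = [(0,0),(0,1),(0,2),(1,2)] ! l"

lemma sides4: "sides 4 = {(0,0),(0,1),(0,2),(1,0),(1,1),(1,2),(2,0),(2,1),(2,2),(3,0),(3,1),(3,2)}"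
proof -
  have a: "{0..<4::nat} = {0,1,2,3}" "{0..<3::nat} = {0,1,2}" by auto
  show ?thesis unfolding sides_def a by auto
qed

lemma gluingT: "is_gluing 4 glT"
  unfolding is_gluing_def sides4 by (simp add: glT_def)

lemma invT: "\<forall>s\<in>sides 4. labT (rot glT s) = labT s"
  unfolding sides4 by (simp add: glT_def labT_def rot_def side_end_def)

lemma conT: "\<forall>s\<in>sides 4. (s, repT (labT s)) \<in> vert_rel 4 glT"
proof
  fix s assume s: "s \<in> sides 4"
  have "repT (labT s) = s \<or> repT (labT s) = rot glT s \<or> repT (labT s) = rot glT (rot glT s)"
    using s unfolding sides4 by (auto simp: glT_def labT_def rot_def side_end_def repT_def)
  then show "(s, repT (labT s)) \<in> vert_rel 4 glT" using con3[OF gluingT s] by blast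
qed

lemma tetra: "ideal_triangulation 0 4 4 glT \<and> T3 4 glT"
proof -
  note L = labeling[OF gluingT invT conT]
  have img: "labT ` sides 4 = {0,1,2,3}" unfolding sides4 by (auto simp: labT_def)
  have cp: "card (punctures 4 glT) = 4" using L(1) img by simp
  have na: "num_arcs 4 = 6" by (simp add: num_arcs_def card_sides)
  have conn: "tri_connected 4 glT"
  proof (rule tri_conn_chain)
    fix t assume "t + 1 < (4::nat)"
    then have "t = 0 \<or> t = 1 \<or> t = 2" by auto
    moreover have "(0, 1) \<in> tri_adj 4 glT \<and> (1, 0) \<in> tri_adj 4 glT"
      using adjI[of "(0,2)" 4 glT "(1,0)"] adjI[of "(1,0)" 4 glT "(0,2)"] by (simp add: sides4 glT_def)
    moreover have "(1, 2) \<in> tri_adj 4 glT \<and> (2, 1) \<in> tri_adj 4 glT"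
      using adjI[of "(1,2)" 4 glT "(2,0)"] adjI[of "(2,0)" 4 glT "(1,2)"] by (simp add: sides4 glT_def)
    moreover have "(2, 3) \<in> tri_adj 4 glT \<and> (3, 2) \<in> tri_adj 4 glT"
      using adjI[of "(2,1)" 4 glT "(3,0)"] adjI[of "(3,0)" 4 glT "(2,1)"] by (simp add: sides4 glT_def)
    ultimately show "(t, t+1) \<in> tri_adj 4 glT \<and> (t+1, t) \<in> tri_adj 4 glT" by (auto simp: numeral_2_eq_2 numeral_3_eq_3)
  qed
  have t3: "T3 4 glT"
    unfolding T3_def punctures_img
  proof
    fix v assume "v \<in> vertex_of 4 glT ` sides 4"
    then obtain s where s: "s \<in> sides 4" "v = vertex_of 4 glT s" by blast
    have l: "labT s = 0 \<or> labT s = 1 \<or> labT s = 2 \<or> labT s = 3"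
      using s(1) unfolding sides4 by (auto simp: labT_def)
    have fin: "finite {t\<in>sides 4. labT t = labT s}" using finite_sides by simp
    obtain a b c where abc: "a \<noteq> b" "b \<noteq> c" "a \<noteq> c" "{a, b, c} \<subseteq> {t\<in>sides 4. labT t = labT s}"
    proof -
      from l show ?thesis
      proof (elim disjE)
        assume 1: "labT s = 0" from 1 show ?thesis using that[of "(0,0)" "(1,0)" "(2,0)"] by (simp add: sides4 labT_def)
      next
        assume 2: "labT s = 1" from 2 show ?thesis using that[of "(0,1)" "(2,2)" "(3,0)"] by (simp add: sides4 labT_def)
      next
        assume 3: "labT s = 2" from 3 show ?thesis using that[of "(0,2)" "(1,1)" "(3,2)"] by (simp add: sides4 labT_def)
      next
        assume 4: "labT s = 3" from 4 show ?thesis using that[of "(1,2)" "(2,1)" "(3,1)"] by (simp add: sides4 labT_def)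
      qed
    qed
    have "card {a, b, c} = 3" using abc by simp
    then have "3 \<le> card {t\<in>sides 4. labT t = labT s}" using card_mono[OF fin abc(4)] by simp
    then show "3 \<le> degree 4 glT v" using L(2)[OF s(1)] s(2) by simp
  qed
  show ?thesis unfolding ideal_triangulation_def using gluingT conn cp na t3 by simp
qed

lemma sphere_m:
  assumes "ideal_triangulation 0 n m gl"
  shows "m + 4 = 2 * n" and "is_gluing m gl" and "card (punctures m gl) = n"
proof -
  have G: "is_gluing m gl" and c: "card (punctures m gl) = n"
    and e: "int (card (punctures m gl)) - int (num_arcs m) + int m = 2"
    using assms unfolding ideal_triangulation_def by auto
  have ev: "even m" by (rule sides_even[OF G])
  have "num_arcs m = 3 * m div 2" by (simp add: num_arcs_def card_sides)
  then show "m + 4 = 2 * n" using e c ev by auto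
  show "is_gluing m gl" "card (punctures m gl) = n" using G c by auto
qed

lemma vertex_in_punct: "s \<in> sides m \<Longrightarrow> vertex_of m gl s \<in> punctures m gl"
  unfolding punctures_img by blast

lemma noT4_5: "\<not> (ideal_triangulation 0 5 m gl \<and> T4 m gl)"
proof
  assume h: "ideal_triangulation 0 5 m gl \<and> T4 m gl"
  then have m: "m = 6" and G: "is_gluing m gl" and c: "card (punctures m gl) = 5"
    using sphere_m[of 5 m gl] by auto
  have fin: "finite (punctures m gl)" unfolding punctures_img by (simp add: finite_sides)
  have "(\<Sum>v\<in>punctures m gl. (4::nat)) \<le> (\<Sum>v\<in>punctures m gl. degree m gl v)"
    using h unfolding T4_def by (intro sum_mono) auto
  then show False using sum_deg[OF G] c m by simp
qed

lemma noT3half_4: "\<not> (ideal_triangulation 0 4 m gl \<and> T3half m gl)"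
proof
  assume h: "ideal_triangulation 0 4 m gl \<and> T3half m gl"
  then have m: "m = 4" and G: "is_gluing m gl" and c: "card (punctures m gl) = 4"
    using sphere_m[of 4 m gl] by auto
  have fin: "finite (punctures m gl)" unfolding punctures_img by (simp add: finite_sides)
  have t3: "\<forall>v\<in>punctures m gl. 3 \<le> degree m gl v" using h unfolding T3half_def T3_def by blast
  have s0: "(0,0) \<in> sides m" using m by (simp add: in_sides2)
  then have "side_end (0,0) \<in> sides m" by (rule side_end_in)
  then obtain v0 where v0: "v0 \<in> punctures m gl" "4 \<le> degree m gl v0"
    using h s0 vertex_in_punct unfolding T3half_def side_start_def by blast
  have "(\<Sum>v\<in>punctures m gl. degree m gl v) = degree m gl v0 + (\<Sum>v\<in>punctures m gl - {v0}. degree m gl v)"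
    using fin v0(1) by (simp add: sum.remove)
  moreover have "(\<Sum>v\<in>punctures m gl - {v0}. (3::nat)) \<le> (\<Sum>v\<in>punctures m gl - {v0}. degree m gl v)"
    using t3 by (intro sum_mono) auto
  moreover have "card (punctures m gl - {v0}) = 3" using c v0(1) fin by simp
  ultimately have "13 \<le> (\<Sum>v\<in>punctures m gl. degree m gl v)" using v0(2) by simp
  then show False using sum_deg[OF G] m by simp
qed

theorem proposition5p1:
  fixes g n :: nat
  assumes "1 \<le> n" and "g = 0 \<longrightarrow> 4 \<le> n"
  shows "(\<not> (g = 0 \<and> (n = 4 \<or> n = 5)) \<longrightarrow>
            (\<exists>m gl. ideal_triangulation g n m gl \<and> T4 m gl))
       \<and> (g = 0 \<and> n = 5 \<longrightarrow>
            (\<exists>m gl. ideal_triangulation g n m gl \<and> T3half m gl) \<and>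
            \<not> (\<exists>m gl. ideal_triangulation g n m gl \<and> T4 m gl))
       \<and> (g = 0 \<and> n = 4 \<longrightarrow>
            (\<exists>m gl. ideal_triangulation g n m gl \<and> T3 m gl) \<and>
            \<not> (\<exists>m gl. ideal_triangulation g n m gl \<and> T3half m gl))"
proof (intro conjI impI)
  assume na: "\<not> (g = 0 \<and> (n = 4 \<or> n = 5))"
  show "\<exists>m gl. ideal_triangulation g n m gl \<and> T4 m gl"
  proof (cases "g = 0")
    case False
    then have "1 \<le> g" by simp
    from famA[OF this assms(1) refl] show ?thesis by blast
  next
    case True
    then have n6: "6 \<le> n" using na assms(2) by auto
    then have k: "3 \<le> n - 2" "4 \<le> n - 2" and nn: "n - 2 + 2 = n" by auto
    have "ideal_triangulation 0 (n - 2 + 2) (2*(n-2)) (glB (n-2)) \<and> T4 (2*(n-2)) (glB (n-2))"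
      using famB_basic[OF k(1)] famB_T4[OF k(1) k(2)] by blast
    then have "ideal_triangulation g n (2*(n-2)) (glB (n-2)) \<and> T4 (2*(n-2)) (glB (n-2))" using True nn by simp
    then show ?thesis by blast
  qed
next
  assume "g = 0 \<and> n = 5"
  then have g: "g = 0" "n = 5" by auto
  have k: "3 \<le> (3::nat)" by simp
  have "ideal_triangulation 0 (3 + 2) (2*3) (glB 3) \<and> T3half (2*3) (glB 3)"
    using famB_basic[OF k] famB_T3half[OF k] by blast
  then have "ideal_triangulation g n (2*3) (glB 3) \<and> T3half (2*3) (glB 3)" using g by simp
  then show "\<exists>m gl. ideal_triangulation g n m gl \<and> T3half m gl" by blast
next
  assume "g = 0 \<and> n = 5"
  then show "\<not> (\<exists>m gl. ideal_triangulation g n m gl \<and> T4 m gl)" using noT4_5 by blast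
next
  assume "g = 0 \<and> n = 4"
  then show "\<exists>m gl. ideal_triangulation g n m gl \<and> T3 m gl" using tetra by blast
next
  assume "g = 0 \<and> n = 4"
  then show "\<not> (\<exists>m gl. ideal_triangulation g n m gl \<and> T3half m gl)" using noT3half_4 by blast
qed


end
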